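(* Let $G$ be a finite graph and $k=\chi(G)$. If every $k$-coloring of $G^2=G\times G$ is trivial (in particular, if $G$ is trivially power-colorable), then $G$ is tight.
   Context: Graphs are simple and undirected; a $k$-coloring is a proper coloring with colors in $\{0,\dots,k-1\}$. The product $G\times G$ has vertex set $V(G)\times V(G)$, with $(u,v)$ adjacent to $(u',v')$ iff $uu'\in E(G)$ and $vv'\in E(G)$; $G^n$ is the analogous product of $n$ copies. A coloring $\Phi$ of a product $\times_{i\in I}G_i$ is trivial if there exist $i^*\in I$ and a proper coloring $\phi$ of $G_{i^*}$ with $\Phi(v)=\phi(v_{i^*})$ for all $v$. A graph $H$ is trivially power-colorable if for every positive integer $n$, every $\chi(H)$-coloring of $H^n$ is trivial. A $k$-coloring $\phi$ of $G$ is tight if for every vertex $v$ and every color $c\ne\phi(v)$ there is a neighbor $u$ of $v$ with $\phi(u)=c$. $G$ is tight if all of its $\chi(G)$-colorings are tight. *)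

theory Defs
  imports Main
begin

definition fin_graph :: "'a set \<Rightarrow> ('a \<Rightarrow> 'a \<Rightarrow> bool) \<Rightarrow> bool" where
  "fin_graph V E \<longleftrightarrow> finite V \<and> (\<forall>u v. E u v \<longrightarrow> u \<in> V \<and> v \<in> V)
     \<and> (\<forall>u v. E u v \<longrightarrow> E v u) \<and> (\<forall>v. \<not> E v v)"

definition proper_coloring :: "'a set \<Rightarrow> ('a \<Rightarrow> 'a \<Rightarrow> bool) \<Rightarrow> ('a \<Rightarrow> nat) \<Rightarrow> bool" where
  "proper_coloring V E f \<longleftrightarrow> (\<forall>u\<in>V. \<forall>v\<in>V. E u v \<longrightarrow> f u \<noteq> f v)"

definition k_coloring :: "'a set \<Rightarrow> ('a \<Rightarrow> 'a \<Rightarrow> bool) \<Rightarrow> nat \<Rightarrow> ('a \<Rightarrow> nat) \<Rightarrow> bool" where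
  "k_coloring V E k f \<longleftrightarrow> (\<forall>v\<in>V. f v < k) \<and> proper_coloring V E f"

definition chromatic_number :: "'a set \<Rightarrow> ('a \<Rightarrow> 'a \<Rightarrow> bool) \<Rightarrow> nat" where
  "chromatic_number V E = (LEAST k. \<exists>f. k_coloring V E k f)"

definition prod_verts :: "'a set \<Rightarrow> 'b set \<Rightarrow> ('a \<times> 'b) set" where
  "prod_verts V W = V \<times> W"

definition prod_edges :: "('a \<Rightarrow> 'a \<Rightarrow> bool) \<Rightarrow> ('b \<Rightarrow> 'b \<Rightarrow> bool) \<Rightarrow> ('a \<times> 'b) \<Rightarrow> ('a \<times> 'b) \<Rightarrow> bool" where
  "prod_edges E F p q \<longleftrightarrow> E (fst p) (fst q) \<and> F (snd p) (snd q)"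

definition trivial_prod_coloring ::
  "'a set \<Rightarrow> ('a \<Rightarrow> 'a \<Rightarrow> bool) \<Rightarrow> 'b set \<Rightarrow> ('b \<Rightarrow> 'b \<Rightarrow> bool) \<Rightarrow> ('a \<times> 'b \<Rightarrow> nat) \<Rightarrow> bool" where
  "trivial_prod_coloring V E W F \<Phi> \<longleftrightarrow>
     (\<exists>\<phi>. proper_coloring V E \<phi> \<and> (\<forall>p\<in>V \<times> W. \<Phi> p = \<phi> (fst p))) \<or>
     (\<exists>\<phi>. proper_coloring W F \<phi> \<and> (\<forall>p\<in>V \<times> W. \<Phi> p = \<phi> (snd p)))"

definition tight_coloring :: "'a set \<Rightarrow> ('a \<Rightarrow> 'a \<Rightarrow> bool) \<Rightarrow> nat \<Rightarrow> ('a \<Rightarrow> nat) \<Rightarrow> bool" where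
  "tight_coloring V E k f \<longleftrightarrow>
     (\<forall>v\<in>V. \<forall>c<k. c \<noteq> f v \<longrightarrow> (\<exists>u\<in>V. E v u \<and> f u = c))"

definition tight_graph :: "'a set \<Rightarrow> ('a \<Rightarrow> 'a \<Rightarrow> bool) \<Rightarrow> bool" where
  "tight_graph V E \<longleftrightarrow>
     (\<forall>f. k_coloring V E (chromatic_number V E) f \<longrightarrow> tight_coloring V E (chromatic_number V E) f)"

end

theory Submission
  imports Defs
begin

theorem mainTheorem5:
  fixes V :: "'a set" and E :: "'a \<Rightarrow> 'a \<Rightarrow> bool"
  assumes "fin_graph V E"
    and "\<forall>\<Phi>. k_coloring (prod_verts V V) (prod_edges E E) (chromatic_number V E) \<Phi>
               \<longrightarrow> trivial_prod_coloring V E V E \<Phi>"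
  shows "tight_graph V E"
  unfolding tight_graph_def
proof (intro allI impI)
  fix f
  define k where "k = chromatic_number V E"
  assume fk: "k_coloring V E (chromatic_number V E) f"
  have irr: "\<And>x. \<not> E x x" and inV: "\<And>x y. E x y \<Longrightarrow> x \<in> V \<and> y \<in> V"
    and sym: "\<And>x y. E x y \<Longrightarrow> E y x"
    using assms(1) unfolding fin_graph_def by blast+
  show "tight_coloring V E (chromatic_number V E) f"
    unfolding tight_coloring_def
  proof (rule ccontr)
    assume "\<not> (\<forall>v\<in>V. \<forall>c<chromatic_number V E. c \<noteq> f v \<longrightarrow> (\<exists>u\<in>V. E v u \<and> f u = c))"
    then obtain v c where v: "v \<in> V" and ck: "c < k" and cv: "c \<noteq> f v"
      and nb: "\<And>u. u \<in> V \<Longrightarrow> E v u \<Longrightarrow> f u \<noteq> c" unfolding k_def by blast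
    have fvk: "f v < k" using fk v unfolding k_coloring_def k_def by blast
    have k2: "k \<ge> 2" using ck cv fvk by linarith
    obtain w where w: "w \<in> V" "w \<noteq> v"
    proof (rule ccontr)
      assume "\<not> thesis"
      with that have "V \<subseteq> {v}" by blast
      hence "k_coloring V E 1 (\<lambda>_. 0)"
        unfolding k_coloring_def proper_coloring_def using irr by auto
      hence "k \<le> 1" unfolding k_def chromatic_number_def by (metis (mono_tags) Least_le)
      with k2 show False by simp
    qed
    define \<Phi> where "\<Phi> = (\<lambda>p::'a\<times>'a. if p = (v,v) then c else f (fst p))"
    have col: "k_coloring (prod_verts V V) (prod_edges E E) k \<Phi>"
      unfolding k_coloring_def proper_coloring_def
    proof (intro conjI ballI impI)
      fix p assume "p \<in> prod_verts V V"
      thus "\<Phi> p < k" using ck fk unfolding \<Phi>_def prod_verts_def k_coloring_def k_def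
        by (cases p) auto
    next
      fix p q assume p: "p \<in> prod_verts V V" and q: "q \<in> prod_verts V V"
        and e: "prod_edges E E p q"
      obtain a b where pab: "p = (a,b)" by (cases p)
      obtain x y where qxy: "q = (x,y)" by (cases q)
      have eax: "E a x" and eby: "E b y" using e pab qxy unfolding prod_edges_def by auto
      have V4: "a \<in> V" "b \<in> V" "x \<in> V" "y \<in> V" using p q pab qxy unfolding prod_verts_def by auto
      have fp: "f a \<noteq> f x" using fk eax V4 unfolding k_coloring_def proper_coloring_def by blast
      show "\<Phi> p \<noteq> \<Phi> q"
      proof (cases "p = (v,v)")
        case True
        then have "a = v" using pab by simp
        then have "x \<noteq> v" using eax irr by blast
        then show ?thesis using True qxy nb[of x] eax \<open>a = v\<close> V4 unfolding \<Phi>_def by auto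
      next
        case False
        show ?thesis
        proof (cases "q = (v,v)")
          case True
          then have "x = v" using qxy by simp
          then have "a \<noteq> v" using eax irr by blast
          have "E v a" using sym eax \<open>x = v\<close> by blast
          then show ?thesis using True False pab nb[of a] V4 \<open>a \<noteq> v\<close> unfolding \<Phi>_def by auto
        next
          case False2: False
          then show ?thesis using False pab qxy fp unfolding \<Phi>_def by auto
        qed
      qed
    qed
    hence "trivial_prod_coloring V E V E \<Phi>" using assms(2) unfolding k_def by blast
    then show False unfolding trivial_prod_coloring_def
    proof (elim disjE exE conjE)
      fix \<phi> assume h: "\<forall>p\<in>V \<times> V. \<Phi> p = \<phi> (fst p)"
      have "\<Phi> (v,v) = \<phi> v" "\<Phi> (v,w) = \<phi> v" using h v w by auto
      thus False using cv w unfolding \<Phi>_def by auto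
    next
      fix \<phi> assume h: "\<forall>p\<in>V \<times> V. \<Phi> p = \<phi> (snd p)"
      have "\<Phi> (v,w) = \<phi> w" "\<Phi> (w,w) = \<phi> w" "\<Phi> (v,v) = \<phi> v" "\<Phi> (w,v) = \<phi> v"
        using h v w by auto
      thus False using cv w unfolding \<Phi>_def by auto
    qed
  qed
qed

end
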